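(* Under the setting and Assumption 1 described in the context, in the limit $M\gg 1$ (leading order as $M\to\infty$ with $L$, $C$, $T$ and all $\alpha_l$ fixed), the arithmetic mean $m_\lambda:=\frac1P\sum_{i=1}^P\lambda_i$ of the eigenvalues $\lambda_1,\dots,\lambda_P$ of the empirical FIM $F$ satisfies $$ m_\lambda = C\,\frac{\kappa_1}{M},\qquad \kappa_1:=\sum_{l=1}^{L}\frac{\alpha_{l-1}}{\alpha}\,\tilde q^{\,l}\,\hat q^{\,l-1},\qquad \alpha:=\sum_{l=1}^{L-1}\alpha_l\alpha_{l-1}. $$ In particular $m_\lambda=O(1/M)$, since $\kappa_1$ does not depend on $M$.
   Context: Network: a fully connected feedforward network with $L\ge 2$ layers of weights. Layer widths are $M_l=\alpha_l M$ for $l=0,1,\dots,L-1$ (layer $0$ is the input, with $M_0$ units), where the $\alpha_l>0$ are fixed constants and $M$ is a large parameter. The output layer has $M_L=C$ units, with $C$ a fixed constant. Forward pass: $h^0_i=x_i$; for $l=1,\dots,L$, $u^l_i=\sum_{j=1}^{M_{l-1}}W^l_{ij}h^{l-1}_j+b^l_i$; for $l\le L-1$, $h^l_i=\phi(u^l_i)$; the output is linear, $f_{\theta,k}(x)=u^L_k$ for $k=1,\dots,C$. The activation $\phi$ and its derivative $\phi'$ are square integrable with respect to the standard Gaussian measure. The parameter vector $\theta=\{W^l_{ij},b^l_i\}$ has total dimension $P$; to leading order $P=\alpha M^2$ with $\alpha:=\sum_{l=1}^{L-1}\alpha_l\alpha_{l-1}$. Random parameters: the entries are independent with $W^l_{ij}\sim\mathcal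 N(0,\sigma_w^2/M_{l-1})$ and $b^l_i\sim\mathcal N(0,\sigma_b^2)$, where $\sigma_w>0$ and $\sigma_b>0$; the parameters are then held fixed. Inputs: $T$ samples $x(t)\in\mathbb R^{M_0}$, $t=1,\dots,T$, with i.i.d. standard Gaussian entries. Empirical FIM: $F=\frac1T\sum_{t=1}^T\sum_{k=1}^C\nabla_\theta f_{\theta,k}(x(t))\,\nabla_\theta f_{\theta,k}(x(t))^{\top}$. This is a $P\times P$ positive semidefinite matrix with eigenvalues $\lambda_1,\dots,\lambda_P\ge 0$. Backpropagated signals: $\delta^l_{k,i}:=\partial f_{\theta,k}/\partial u^l_i$. These satisfy $\delta^L_{k,i}=1$ if $i=k$ and $0$ otherwise, and $\delta^l_{k,i}=\phi'(u^l_i)\sum_j\delta^{l+1}_{k,j}W^{l+1}_{ji}$. The weight gradients are $\partial f_{\theta,k}/\partial W^l_{ij}=\delta^l_{k,i}h^{l-1}_j$. Macroscopic variables: let $Du$ denote the standard Gaussian measure. For $a>0$, $|b|\le a$ and $c=b/a$, define $$I_\psi[a,b]=\int Dz_1Dz_2\,\psi(\sqrt a z_1)\,\psi\big(\sqrt a(cz_1+\sqrt{1-c^2}z_2)\big).$$ Set $\hat q^0=1$ and $\hat q^0_{st}=0$. For $l=0,\dots,L-1$: - $q^{l+1}=\sigma_w^2\hat q^l+\sigma_b^2$ and $\hat q^{l+1}=\int Du\,\phi^2(\sqrt{q^{l+1}}u)$; - $q^{l+1}_{st}=\sigma_w^2\hat q^l_{st}+\sigma_b^2$ and $\hat q^{l+1}_{st}=I_\phi[q^{l+1},q^{l+1}_{st}]$.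 Backward variables: set $\tilde q^L=\tilde q^L_{st}=1$. For $l=L-1,\dots,1$: - $\tilde q^l=\sigma_w^2\tilde q^{l+1}\int Du\,[\phi'(\sqrt{q^l}u)]^2$; - $\tilde q^l_{st}=\sigma_w^2\tilde q^{l+1}_{st}\,I_{\phi'}[q^l,q^l_{st}]$. In the large-$M$ limit, these describe $\frac1{M_l}\sum_i h^l_i(t)^2\to\hat q^l$, $\frac1{M_l}\sum_ih^l_i(s)h^l_i(t)\to\hat q^l_{st}$ ($s\ne t$), $\sum_i\delta^l_{k,i}(t)^2\to\tilde q^l$ and $\sum_i\delta^l_{k,i}(s)\delta^l_{k,i}(t)\to\tilde q^l_{st}$ ($s\ne t$). Assumption 1 (gradient independence): when evaluating the backpropagated quantities $\tilde q^l$ and $\tilde q^l_{st}$, the parameters in the backward chain may be treated as an independent copy of those in the forward chain. Consequently, the backward recurrences above hold. *)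

theory Defs
  imports "HOL-Probability.Probability" "HOL-Library.Landau_Symbols"
          "Jordan_Normal_Form.Char_Poly"
begin

text \<open>Parameters: W l i j is W^l_{ij}, b l i is b^l_i. N l is the width M_l
  (N 0 = M_0 input, N L = C output). phi the activation, dphi its derivative.
  x the input vector (h^0). Indices are 0-based: unit i of layer l has i < N l.\<close>

fun hact :: "(real \<Rightarrow> real) \<Rightarrow> (nat \<Rightarrow> nat \<Rightarrow> nat \<Rightarrow> real) \<Rightarrow> (nat \<Rightarrow> nat \<Rightarrow> real)
     \<Rightarrow> (nat \<Rightarrow> nat) \<Rightarrow> (nat \<Rightarrow> real) \<Rightarrow> nat \<Rightarrow> nat \<Rightarrow> real"
and preact :: "(real \<Rightarrow> real) \<Rightarrow> (nat \<Rightarrow> nat \<Rightarrow> nat \<Rightarrow> real) \<Rightarrow> (nat \<Rightarrow> nat \<Rightarrow> real)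
     \<Rightarrow> (nat \<Rightarrow> nat) \<Rightarrow> (nat \<Rightarrow> real) \<Rightarrow> nat \<Rightarrow> nat \<Rightarrow> real" where
  "hact phi W b N x 0 i = x i"
| "hact phi W b N x (Suc l) i = phi (preact phi W b N x (Suc l) i)"
| "preact phi W b N x 0 i = 0"
| "preact phi W b N x (Suc l) i =
     (\<Sum>j<N l. W (Suc l) i j * hact phi W b N x l j) + b (Suc l) i"

definition net_out where
  "net_out phi W b N L x k = preact phi W b N x L k"

text \<open>Backpropagated signal delta^l_{k,i}; delta_aux d is delta^{L-d}.\<close>
fun delta_aux :: "(real \<Rightarrow> real) \<Rightarrow> (real \<Rightarrow> real) \<Rightarrow> (nat \<Rightarrow> nat \<Rightarrow> nat \<Rightarrow> real)
     \<Rightarrow> (nat \<Rightarrow> nat \<Rightarrow> real) \<Rightarrow> (nat \<Rightarrow> nat) \<Rightarrow> nat \<Rightarrow> (nat \<Rightarrow> real) \<Rightarrow> nat \<Rightarrow> nat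
     \<Rightarrow> nat \<Rightarrow> real" where
  "delta_aux phi dphi W b N L x k 0 i = (if i = k then 1 else 0)"
| "delta_aux phi dphi W b N L x k (Suc d) i =
     dphi (preact phi W b N x (L - Suc d) i) *
     (\<Sum>j<N (L - d). delta_aux phi dphi W b N L x k d j * W (L - d) j i)"

definition delta where
  "delta phi dphi W b N L x k l i = delta_aux phi dphi W b N L x k (L - l) i"

datatype param = Wp nat nat nat | Bp nat nat

fun grad :: "(real \<Rightarrow> real) \<Rightarrow> (real \<Rightarrow> real) \<Rightarrow> (nat \<Rightarrow> nat \<Rightarrow> nat \<Rightarrow> real)
     \<Rightarrow> (nat \<Rightarrow> nat \<Rightarrow> real) \<Rightarrow> (nat \<Rightarrow> nat) \<Rightarrow> nat \<Rightarrow> (nat \<Rightarrow> real) \<Rightarrow> nat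
     \<Rightarrow> param \<Rightarrow> real" where
  "grad phi dphi W b N L x k (Wp l i j) = delta phi dphi W b N L x k l i * hact phi W b N x (l - 1) j"
| "grad phi dphi W b N L x k (Bp l i) = delta phi dphi W b N L x k l i"

definition param_list :: "(nat \<Rightarrow> nat) \<Rightarrow> nat \<Rightarrow> param list" where
  "param_list N L =
     [Wp l i j. l \<leftarrow> [1..<Suc L], i \<leftarrow> [0..<N l], j \<leftarrow> [0..<N (l - 1)]]
     @ [Bp l i. l \<leftarrow> [1..<Suc L], i \<leftarrow> [0..<N l]]"

definition num_params where "num_params N L = length (param_list N L)"

definition FIM :: "(real \<Rightarrow> real) \<Rightarrow> (real \<Rightarrow> real) \<Rightarrow> (nat \<Rightarrow> nat \<Rightarrow> nat \<Rightarrow> real)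
     \<Rightarrow> (nat \<Rightarrow> nat \<Rightarrow> real) \<Rightarrow> (nat \<Rightarrow> nat) \<Rightarrow> nat \<Rightarrow> nat \<Rightarrow> (nat \<Rightarrow> nat \<Rightarrow> real)
     \<Rightarrow> real mat" where
  "FIM phi dphi W b N L T X =
     (let ps = param_list N L; P = length ps in
      mat P P (\<lambda>(a, c). (1 / real T) * (\<Sum>t<T. \<Sum>k<N L.
          grad phi dphi W b N L (X t) k (ps ! a) * grad phi dphi W b N L (X t) k (ps ! c))))"

text \<open>Arithmetic mean of the eigenvalues of a square real matrix, counted with
  algebraic multiplicity (the complex roots of the characteristic polynomial).\<close>
definition eig_mean :: "real mat \<Rightarrow> real" where
  "eig_mean A = Re (sum_mset (proots (char_poly (map_mat complex_of_real A)))) / real (dim_row A)"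

definition gauss :: "real measure" where
  "gauss = density lborel std_normal_density"

fun qhat :: "(real \<Rightarrow> real) \<Rightarrow> real \<Rightarrow> real \<Rightarrow> nat \<Rightarrow> real"
and qq :: "(real \<Rightarrow> real) \<Rightarrow> real \<Rightarrow> real \<Rightarrow> nat \<Rightarrow> real" where
  "qhat phi sw sb 0 = 1"
| "qhat phi sw sb (Suc l) = (\<integral>u. (phi (sqrt (qq phi sw sb (Suc l)) * u))\<^sup>2 \<partial>gauss)"
| "qq phi sw sb 0 = 0"
| "qq phi sw sb (Suc l) = sw\<^sup>2 * qhat phi sw sb l + sb\<^sup>2"

text \<open>tilde q^l; qtil_aux d is tilde q^{L-d}.\<close>
fun qtil_aux :: "(real \<Rightarrow> real) \<Rightarrow> (real \<Rightarrow> real) \<Rightarrow> real \<Rightarrow> real \<Rightarrow> nat \<Rightarrow> nat \<Rightarrow> real" where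
  "qtil_aux phi dphi sw sb L 0 = 1"
| "qtil_aux phi dphi sw sb L (Suc d) =
     sw\<^sup>2 * qtil_aux phi dphi sw sb L d *
     (\<integral>u. (dphi (sqrt (qq phi sw sb (L - Suc d)) * u))\<^sup>2 \<partial>gauss)"

definition qtil where
  "qtil phi dphi sw sb L l = qtil_aux phi dphi sw sb L (L - l)"

definition alpha_tot :: "(nat \<Rightarrow> real) \<Rightarrow> nat \<Rightarrow> real" where
  "alpha_tot \<alpha> L = (\<Sum>l\<in>{1..L-1}. \<alpha> l * \<alpha> (l - 1))"

definition kappa1 where
  "kappa1 phi dphi sw sb \<alpha> L =
     (\<Sum>l\<in>{1..L}. \<alpha> (l - 1) / alpha_tot \<alpha> L * qtil phi dphi sw sb L l * qhat phi sw sb (l - 1))"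

end

theory Submission
  imports Defs "Jordan_Normal_Form.Schur_Decomposition"
begin

definition tr :: "'a::comm_ring_1 mat \<Rightarrow> 'a" where
  "tr A = (\<Sum>i<dim_row A. A $$ (i,i))"

lemma tr_comm: assumes "A \<in> carrier_mat n m" "B \<in> carrier_mat m n"
  shows "tr (A * B) = tr (B * A)"
proof -
  have "tr (A*B) = (\<Sum>i<n. \<Sum>k<m. A $$ (i,k) * B $$ (k,i))"
    using assms by (simp add: tr_def scalar_prod_def atLeast0LessThan)
  also have "\<dots> = (\<Sum>k<m. \<Sum>i<n. B $$ (k,i) * A $$ (i,k))"
    by (subst sum.swap) (simp add: mult.commute)
  also have "\<dots> = tr (B*A)"
    using assms by (simp add: tr_def scalar_prod_def atLeast0LessThan)
  finally show ?thesis .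
qed

lemma tr_sim: assumes "similar_mat_wit A B P Q" shows "tr A = tr B"
proof -
  define n where "n = dim_row A"
  note d = similar_mat_witD[OF n_def assms]
  have "tr A = tr (P * (B * Q))" using d by (simp add: assoc_mult_mat[of P n n B n Q n])
  also have "\<dots> = tr ((B * Q) * P)" using d by (intro tr_comm[of _ n n]) auto
  also have "\<dots> = tr (B * (Q * P))" using d by (simp add: assoc_mult_mat[of B n n Q n P n])
  also have "\<dots> = tr B" using d by simp
  finally show ?thesis .
qed

lemma eig_mean_tr: assumes A: "A \<in> carrier_mat n n"
  shows "eig_mean A = tr A / real n"
proof -
  let ?A = "map_mat complex_of_real A"
  have A': "?A \<in> carrier_mat n n" using A by simp
  obtain as where cp: "char_poly ?A = (\<Prod>a\<leftarrow>as. [:- a, 1:])" and len: "length as = n"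
    using char_poly_factorized[OF A'] by blast
  obtain B P Q where sd: "schur_decomposition ?A as = (B,P,Q)" by (cases "schur_decomposition ?A as") auto
  from schur_decomposition[OF A' cp sd] have sim: "similar_mat_wit ?A B P Q" and dg: "diag_mat B = as" by auto
  have Bc: "B \<in> carrier_mat n n" using similar_mat_witD2[OF A' sim] by auto
  have "proots (char_poly ?A) = mset as"
    unfolding cp
  proof (induction as)
    case (Cons a as)
    have nz: "(\<Prod>a\<leftarrow>as. [:- a, 1:]) \<noteq> 0" by (auto simp: prod_list_zero_iff)
    have e: "(\<Prod>a\<leftarrow>a # as. [:- a, 1:]) = [:- a, 1:] * (\<Prod>a\<leftarrow>as. [:- a, 1:])" by simp
    have "proots ([:- a, 1:] * (\<Prod>a\<leftarrow>as. [:- a, 1:])) = proots [:- a, 1:] + proots (\<Prod>a\<leftarrow>as. [:- a, 1:])"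
      by (rule proots_mult) (use nz in auto)
    then show ?case unfolding e using Cons by simp
  qed simp
  then have pr: "sum_mset (proots (char_poly ?A)) = sum_list as" by (simp add: sum_mset_sum_list)
  have "sum_list as = tr B" unfolding dg[symmetric] using Bc
    by (simp add: diag_mat_def tr_def sum_list_sum_nth atLeast0LessThan)
  also have "\<dots> = tr ?A" using tr_sim[OF sim] by simp
  also have "\<dots> = complex_of_real (tr A)" using A by (simp add: tr_def)
  finally show ?thesis unfolding eig_mean_def pr using A by simp
qed
lemma sum_list_upt_conv: "sum_list (map g [a..<b]) = sum g {a..<b}"
  by (simp add: interv_sum_list_conv_sum_set_nat)

lemma sum_list_concat': "sum_list (concat xss) = sum_list (map sum_list xss)"
  by (induction xss) auto

lemma param_sum:
  fixes f :: "param \<Rightarrow> 'a::comm_monoid_add"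
  shows "sum_list (map f (param_list N L)) =
    (\<Sum>l\<in>{1..L}. (\<Sum>i<N l. \<Sum>j<N (l-1). f (Wp l i j)) + (\<Sum>i<N l. f (Bp l i)))"
  unfolding param_list_def
  by (simp add: map_concat sum_list_concat' comp_def sum_list_upt_conv sum.distrib
      atLeast0LessThan atLeastLessThanSuc_atLeastAtMost del: upt_Suc)

lemma length_sum: "real (length xs) = sum_list (map (\<lambda>_. 1::real) xs)"
  by (induction xs) auto

lemma num_params_eq: "real (num_params N L) =
    (\<Sum>l\<in>{1..L}. real (N l) * real (N (l-1)) + real (N l))"
  unfolding num_params_def length_sum param_sum by simp

lemma double_sum_prod:
  fixes c :: real
  shows "(\<Sum>i<n. \<Sum>j<m. c * (\<Sum>t<T. \<Sum>k<K. (d t k i * h t j)^2))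
       = c * (\<Sum>t<T. \<Sum>k<K. (\<Sum>i<n. (d t k i)^2) * (\<Sum>j<m. (h t j)^2))"
proof -
  have "(\<Sum>i<n. \<Sum>j<m. c * (\<Sum>t<T. \<Sum>k<K. (d t k i * h t j)^2))
      = c * (\<Sum>i<n. \<Sum>j<m. \<Sum>t<T. \<Sum>k<K. (d t k i)^2 * (h t j)^2)"
    by (simp add: sum_distrib_left power_mult_distrib)
  also have "(\<Sum>i<n. \<Sum>j<m. \<Sum>t<T. \<Sum>k<K. (d t k i)^2 * (h t j)^2)
      = (\<Sum>t<T. \<Sum>k<K. \<Sum>i<n. \<Sum>j<m. (d t k i)^2 * (h t j)^2)"
  proof -
    have "(\<Sum>i<n. \<Sum>j<m. \<Sum>t<T. \<Sum>k<K. (d t k i)^2 * (h t j)^2)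
       = (\<Sum>i<n. \<Sum>t<T. \<Sum>j<m. \<Sum>k<K. (d t k i)^2 * (h t j)^2)"
      by (rule sum.cong, rule refl, rule sum.swap)
    also have "\<dots> = (\<Sum>i<n. \<Sum>t<T. \<Sum>k<K. \<Sum>j<m. (d t k i)^2 * (h t j)^2)"
      by (rule sum.cong, rule refl, rule sum.cong, rule refl, rule sum.swap)
    also have "\<dots> = (\<Sum>t<T. \<Sum>i<n. \<Sum>k<K. \<Sum>j<m. (d t k i)^2 * (h t j)^2)"
      by (rule sum.swap)
    also have "\<dots> = (\<Sum>t<T. \<Sum>k<K. \<Sum>i<n. \<Sum>j<m. (d t k i)^2 * (h t j)^2)"
      by (rule sum.cong, rule refl, rule sum.swap)
    finally show ?thesis .
  qed
  also have "\<dots> = (\<Sum>t<T. \<Sum>k<K. (\<Sum>i<n. (d t k i)^2) * (\<Sum>j<m. (h t j)^2))"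
    by (simp add: sum_product)
  finally show ?thesis .
qed

lemma FIM_carrier: "FIM phi dphi W b N L T X \<in> carrier_mat (num_params N L) (num_params N L)"
  unfolding FIM_def num_params_def Let_def by simp

lemma tr_FIM: "tr (FIM phi dphi W b N L T X) = (\<Sum>l\<in>{1..L}. (1/real T) *
   (\<Sum>t<T. \<Sum>k<N L. (\<Sum>i<N l. (delta phi dphi W b N L (X t) k l i)^2) *
        ((\<Sum>j<N (l-1). (hact phi W b N (X t) (l-1) j)^2) + 1)))"
proof -
  define ps where "ps = param_list N L"
  define f where "f p = (1/real T) * (\<Sum>t<T. \<Sum>k<N L. (grad phi dphi W b N L (X t) k p)^2)" for p
  have "tr (FIM phi dphi W b N L T X) = (\<Sum>a<length ps. f (ps ! a))"
    unfolding tr_def FIM_def Let_def ps_def[symmetric] f_def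
    by (simp add: power2_eq_square)
  also have "\<dots> = sum_list (map f ps)"
    by (simp add: sum_list_sum_nth atLeast0LessThan)
  also have "\<dots> = (\<Sum>l\<in>{1..L}. (\<Sum>i<N l. \<Sum>j<N (l-1). f (Wp l i j)) + (\<Sum>i<N l. f (Bp l i)))"
    unfolding ps_def by (rule param_sum)
  also have "\<dots> = (\<Sum>l\<in>{1..L}. (1/real T) *
   (\<Sum>t<T. \<Sum>k<N L. (\<Sum>i<N l. (delta phi dphi W b N L (X t) k l i)^2) *
        ((\<Sum>j<N (l-1). (hact phi W b N (X t) (l-1) j)^2) + 1)))"
  proof (rule sum.cong, rule refl)
    fix l
    have w: "(\<Sum>i<N l. \<Sum>j<N (l-1). f (Wp l i j)) = (1/real T) *
       (\<Sum>t<T. \<Sum>k<N L. (\<Sum>i<N l. (delta phi dphi W b N L (X t) k l i)^2) *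
        (\<Sum>j<N (l-1). (hact phi W b N (X t) (l-1) j)^2))"
      unfolding f_def grad.simps by (rule double_sum_prod)
    have bb: "(\<Sum>i<N l. f (Bp l i)) = (1/real T) *
       (\<Sum>t<T. \<Sum>k<N L. (\<Sum>i<N l. (delta phi dphi W b N L (X t) k l i)^2))"
      unfolding f_def grad.simps
      by (simp add: sum_distrib_left sum.swap[of _ "{..<N l}"])
    show "(\<Sum>i<N l. \<Sum>j<N (l-1). f (Wp l i j)) + (\<Sum>i<N l. f (Bp l i)) = (1/real T) *
   (\<Sum>t<T. \<Sum>k<N L. (\<Sum>i<N l. (delta phi dphi W b N L (X t) k l i)^2) *
        ((\<Sum>j<N (l-1). (hact phi W b N (X t) (l-1) j)^2) + 1))"
      unfolding w bb by (simp add: distrib_left sum.distrib)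
  qed
  finally show ?thesis .
qed

theorem theorem1:
  fixes phi dphi :: "real \<Rightarrow> real"
    and sw sb :: real
    and \<alpha> :: "nat \<Rightarrow> real"
    and L C T :: nat
    and Ms :: "nat \<Rightarrow> nat"
    and N :: "nat \<Rightarrow> nat \<Rightarrow> nat"
    and W :: "nat \<Rightarrow> nat \<Rightarrow> nat \<Rightarrow> nat \<Rightarrow> real"
    and b :: "nat \<Rightarrow> nat \<Rightarrow> nat \<Rightarrow> real"
    and X :: "nat \<Rightarrow> nat \<Rightarrow> nat \<Rightarrow> real"
  assumes L2: "L \<ge> 2" and Cpos: "C \<ge> 1" and Tpos: "T \<ge> 1"
    and sw: "sw > 0" and sb: "sb > 0"
    and alpha_pos: "\<And>l. l < L \<Longrightarrow> \<alpha> l > 0"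
    and phi_meas: "phi \<in> borel_measurable borel"
    and dphi_meas: "dphi \<in> borel_measurable borel"
    and phi_L2: "integrable gauss (\<lambda>u. (phi u)\<^sup>2)"
    and dphi_L2: "integrable gauss (\<lambda>u. (dphi u)\<^sup>2)"
    and dphi_deriv: "\<And>u. phi differentiable (at u) \<Longrightarrow> (phi has_real_derivative dphi u) (at u)"
    and M_lim: "filterlim (\<lambda>n. Ms n) at_top sequentially"
    and widths: "\<And>n l. l < L \<Longrightarrow> real (N n l) = \<alpha> l * real (Ms n)"
    and width_out: "\<And>n. N n L = C"
    and fwd: "\<And>t l. t < T \<Longrightarrow> l < L \<Longrightarrow>
       (\<lambda>n. (\<Sum>i<N n l. (hact phi (W n) (b n) (N n) (X n t) l i)\<^sup>2) / real (N n l))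
         \<longlonglongrightarrow> qhat phi sw sb l"
    and bwd: "\<And>t k l. t < T \<Longrightarrow> k < C \<Longrightarrow> 1 \<le> l \<Longrightarrow> l \<le> L \<Longrightarrow>
       (\<lambda>n. \<Sum>i<N n l. (delta phi dphi (W n) (b n) (N n) L (X n t) k l i)\<^sup>2)
         \<longlonglongrightarrow> qtil phi dphi sw sb L l"
  shows "(\<lambda>n. real (Ms n) * eig_mean (FIM phi dphi (W n) (b n) (N n) L T (X n)))
           \<longlonglongrightarrow> real C * kappa1 phi dphi sw sb \<alpha> L
    \<and> (\<lambda>n. eig_mean (FIM phi dphi (W n) (b n) (N n) L T (X n))) \<in> O(\<lambda>n. 1 / real (Ms n))"
proof -
  define M where "M n = real (Ms n)" for n
  define em where "em n = eig_mean (FIM phi dphi (W n) (b n) (N n) L T (X n))" for n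
  define D where "D t k l n = (\<Sum>i<N n l. (delta phi dphi (W n) (b n) (N n) L (X n t) k l i)^2)" for t k l n
  define H where "H t l n = (\<Sum>j<N n l. (hact phi (W n) (b n) (N n) (X n t) l j)^2)" for t l n
  define Hb where "Hb t l n = H t l n / real (N n l)" for t l n
  define a where "a n l = real (N n l) / M n" for n l
  define ab where "ab l = (if l < L then \<alpha> l else 0)" for l
  define Num where "Num n = (\<Sum>l\<in>{1..L}. (1/real T) * (\<Sum>t<T. \<Sum>k<C. D t k l n * (a n (l-1) * Hb t (l-1) n + 1 / M n)))" for n
  define Den where "Den n = (\<Sum>l\<in>{1..L}. a n l * a n (l-1) + a n l * (1 / M n))" for n
  have Mr: "filterlim M at_top sequentially"
    unfolding M_def by (rule filterlim_compose[OF filterlim_real_sequentially M_lim])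
  have ev1: "eventually (\<lambda>n. 1 \<le> M n) sequentially"
    using Mr unfolding filterlim_at_top by blast
  have inv0: "(\<lambda>n. 1 / M n) \<longlonglongrightarrow> 0"
    using tendsto_inverse_0_at_top[OF Mr] by (simp add: inverse_eq_divide)
  have a_lim: "(\<lambda>n. a n l) \<longlonglongrightarrow> ab l" if "l \<le> L" for l
  proof (cases "l < L")
    case True
    have "eventually (\<lambda>n. \<alpha> l = a n l) sequentially"
      using ev1 by eventually_elim (use True widths in \<open>auto simp: a_def M_def\<close>)
    then show ?thesis using True unfolding ab_def by (auto intro: Lim_transform_eventually)
  next
    case False
    then have lL: "l = L" using that by simp
    have "(\<lambda>n. real C * (1 / M n)) \<longlonglongrightarrow> real C * 0" by (intro tendsto_intros inv0)
    then show ?thesis using lL unfolding ab_def a_def by (simp add: width_out)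
  qed
  have Hb_lim: "(\<lambda>n. Hb t l n) \<longlonglongrightarrow> qhat phi sw sb l" if "t < T" "l < L" for t l
    using fwd[OF that] unfolding Hb_def H_def .
  have D_lim: "(\<lambda>n. D t k l n) \<longlonglongrightarrow> qtil phi dphi sw sb L l" if "t < T" "k < C" "1 \<le> l" "l \<le> L" for t k l
    using bwd[OF that] unfolding D_def .
  have Num_lim: "Num \<longlonglongrightarrow> (\<Sum>l\<in>{1..L}. (1/real T) * (\<Sum>t<T. \<Sum>k<C.
        qtil phi dphi sw sb L l * (ab (l-1) * qhat phi sw sb (l-1) + 0)))"
    unfolding Num_def
    by (intro tendsto_sum tendsto_mult tendsto_add tendsto_const a_lim Hb_lim D_lim inv0) auto
  have Den_lim: "Den \<longlonglongrightarrow> (\<Sum>l\<in>{1..L}. ab l * ab (l-1) + ab l * 0)"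
    unfolding Den_def
    by (intro tendsto_sum tendsto_mult tendsto_add tendsto_const a_lim inv0) auto
  have Lset: "{1..L} = insert L {1..L-1}" using L2 by auto
  have atot: "(\<Sum>l\<in>{1..L}. ab l * ab (l-1) + ab l * 0) = alpha_tot \<alpha> L"
    unfolding alpha_tot_def Lset using L2
    by (simp add: ab_def) (rule sum.cong, auto)
  have atot_pos: "alpha_tot \<alpha> L > 0"
    unfolding alpha_tot_def using L2 alpha_pos
    by (intro sum_pos) (auto intro!: mult_pos_pos)
  have numv: "(\<Sum>l\<in>{1..L}. (1/real T) * (\<Sum>t<T. \<Sum>k<C.
        qtil phi dphi sw sb L l * (ab (l-1) * qhat phi sw sb (l-1) + 0)))
      = real C * (\<Sum>l\<in>{1..L}. \<alpha> (l-1) * qtil phi dphi sw sb L l * qhat phi sw sb (l-1))"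
    using Tpos L2 by (simp add: ab_def sum_distrib_left) (rule sum.cong, auto)
  have lim: "(\<lambda>n. Num n / Den n) \<longlonglongrightarrow> real C * kappa1 phi dphi sw sb \<alpha> L"
  proof -
    have "(\<lambda>n. Num n / Den n) \<longlonglongrightarrow>
        (real C * (\<Sum>l\<in>{1..L}. \<alpha> (l-1) * qtil phi dphi sw sb L l * qhat phi sw sb (l-1))) / alpha_tot \<alpha> L"
      using tendsto_divide[OF Num_lim Den_lim] atot atot_pos numv by simp
    moreover have "(real C * (\<Sum>l\<in>{1..L}. \<alpha> (l-1) * qtil phi dphi sw sb L l * qhat phi sw sb (l-1))) / alpha_tot \<alpha> L
        = real C * kappa1 phi dphi sw sb \<alpha> L"
      unfolding kappa1_def by (simp add: sum_divide_distrib[symmetric])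
    ultimately show ?thesis by simp
  qed
  have eq: "eventually (\<lambda>n. Num n / Den n = M n * em n) sequentially"
    using ev1
  proof eventually_elim
    case (elim n)
    have Mp: "M n > 0" using elim by simp
    have Npos: "real (N n l) > 0" if "l < L" for l
      using widths[OF that, of n] alpha_pos[OF that] Mp unfolding M_def by simp
    have Pp: "real (num_params (N n) L) = M n ^ 2 * Den n"
      unfolding num_params_eq Den_def a_def sum_distrib_left using Mp
      by (intro sum.cong refl) (simp add: power2_eq_square field_simps)
    have "tr (FIM phi dphi (W n) (b n) (N n) L T (X n)) = M n * Num n"
      unfolding tr_FIM Num_def sum_distrib_left[of "M n"]
    proof (rule sum.cong, rule refl)
      fix l assume l: "l \<in> {1..L}"
      have "l - 1 < L" using l by auto
      then have Nl: "real (N n (l-1)) > 0" using Npos[of "l-1"] by blast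
      show "1 / real T * (\<Sum>t<T. \<Sum>k<N n L. (\<Sum>i<N n l. (delta phi dphi (W n) (b n) (N n) L (X n t) k l i)\<^sup>2) *
            ((\<Sum>j<N n (l - 1). (hact phi (W n) (b n) (N n) (X n t) (l - 1) j)\<^sup>2) + 1)) =
          M n * (1 / real T * (\<Sum>t<T. \<Sum>k<C. D t k l n * (a n (l - 1) * Hb t (l - 1) n + 1 / M n)))"
      proof -
        have trm: "D t k l n * (H t (l-1) n + 1) = M n * (D t k l n * (a n (l-1) * Hb t (l-1) n + 1 / M n))" for t k
          unfolding Hb_def a_def using Mp Nl by (simp add: field_simps)
        show ?thesis
          unfolding width_out D_def[symmetric] H_def[symmetric] trm
          by (simp add: sum_distrib_left mult_ac)
      qed
    qed
    then show ?case
      unfolding em_def eig_mean_tr[OF FIM_carrier] Pp using Mp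
      by (simp add: power2_eq_square field_simps)
  qed
  have conv: "(\<lambda>n. M n * em n) \<longlonglongrightarrow> real C * kappa1 phi dphi sw sb \<alpha> L"
    by (rule Lim_transform_eventually[OF lim eq])
  have bigo: "em \<in> O(\<lambda>n. 1 / real (Ms n))"
  proof -
    have "Bseq (\<lambda>n. M n * em n)" using conv by (intro convergent_imp_Bseq) (auto simp: convergent_def)
    then obtain K where K: "K > 0" "\<And>n. norm (M n * em n) \<le> K" by (auto elim!: BseqE)
    have "eventually (\<lambda>n. norm (em n) \<le> K * norm (1 / real (Ms n))) sequentially"
      using ev1
    proof eventually_elim
      case (elim n)
      have Mp: "M n > 0" using elim by simp
      have "\<bar>M n\<bar> * \<bar>em n\<bar> \<le> K" using K(2)[of n] by (simp add: abs_mult)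
      then show ?case using Mp unfolding M_def[symmetric] by (simp add: field_simps)
    qed
    then show ?thesis by (rule bigoI)
  qed
  show ?thesis using conv bigo unfolding M_def em_def by simp
qed

end
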